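(* Let $(A_n)_{n\in\mathbb Z^+}$ be a sequence of invertible linear operators on $\mathbb R^d$ that admits a strong exponential dichotomy with respect to a sequence of norms $\|\cdot\|_n$, $n\in\mathbb Z^+$, and projections $P_n$, $n\in\mathbb Z^+$. Let $(P_n')_{n\in\mathbb Z^+}$ be projections on $\mathbb R^d$ with $P'_{n+1}A_n=A_nP'_n$ for all $n\in\mathbb Z^+$. Then $(A_n)_{n\in\mathbb Z^+}$ admits a strong exponential dichotomy with respect to the norms $\|\cdot\|_n$ and projections $P'_n$ if and only if $\operatorname{Im}P_0=\operatorname{Im}P_0'$.
   Context: $\mathbb Z^+=\{0,1,\dots\}$. $\mathcal A(m,n)=A_{m-1}\cdots A_n$ ($m>n$), $\mathrm{Id}$ ($m=n$), $A_m^{-1}\cdots A_{n-1}^{-1}$ ($m<n$). Strong exponential dichotomy w.r.t. norms $\{\|\cdot\|_n\}$ and projections $P_n$: $A_nP_n=P_{n+1}A_n$ for all $n$, and there exist $K>0$, $a\ge\lambda>0$ with, for $m\ge n$, $x\in\mathbb R^d$, $Q_m=\mathrm{Id}-P_m$: $\|\mathcal A(m,n)P_nx\|_m\le Ke^{-\lambda(m-n)}\|x\|_n$, $\|\mathcal A(n,m)Q_mx\|_n\le Ke^{-\lambda(m-n)}\|x\|_m$, $\|\mathcal A(m,n)x\|_m\le Ke^{a(m-n)}\|x\|_n$, $\|\mathcal A(n,m)x\|_n\le Ke^{a(m-n)}\|x\|_m$. *)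

theory Defs
  imports "HOL-Analysis.Analysis"
begin

fun fwd_prod :: "(nat \<Rightarrow> real^'d^'d) \<Rightarrow> nat \<Rightarrow> nat \<Rightarrow> real^'d^'d" where
  "fwd_prod A n 0 = mat 1"
| "fwd_prod A n (Suc k) = A (n + k) ** fwd_prod A n k"

fun bwd_prod :: "(nat \<Rightarrow> real^'d^'d) \<Rightarrow> nat \<Rightarrow> nat \<Rightarrow> real^'d^'d" where
  "bwd_prod A m 0 = mat 1"
| "bwd_prod A m (Suc k) = bwd_prod A m k ** matrix_inv (A (m + k))"

definition cocycle :: "(nat \<Rightarrow> real^'d^'d) \<Rightarrow> nat \<Rightarrow> nat \<Rightarrow> real^'d^'d" where
  "cocycle A m n = (if n \<le> m then fwd_prod A n (m - n) else bwd_prod A m (n - m))"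

definition is_norm_on :: "(real^'d \<Rightarrow> real) \<Rightarrow> bool" where
  "is_norm_on N \<longleftrightarrow>
     (\<forall>x. 0 \<le> N x) \<and> (\<forall>x. N x = 0 \<longleftrightarrow> x = 0) \<and>
     (\<forall>c x. N (c *\<^sub>R x) = \<bar>c\<bar> * N x) \<and> (\<forall>x y. N (x + y) \<le> N x + N y)"

definition is_projection :: "real^'d^'d \<Rightarrow> bool" where
  "is_projection P \<longleftrightarrow> P ** P = P"

definition strong_exp_dichotomy ::
  "(nat \<Rightarrow> real^'d^'d) \<Rightarrow> (nat \<Rightarrow> real^'d \<Rightarrow> real) \<Rightarrow> (nat \<Rightarrow> real^'d^'d) \<Rightarrow> bool" where
  "strong_exp_dichotomy A N P \<longleftrightarrow>
     (\<forall>n. A n ** P n = P (Suc n) ** A n) \<and>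
     (\<exists>K a lam :: real. K > 0 \<and> lam > 0 \<and> a \<ge> lam \<and>
        (\<forall>m n x. n \<le> m \<longrightarrow>
           N m (cocycle A m n *v (P n *v x)) \<le> K * exp (- lam * real (m - n)) * N n x \<and>
           N n (cocycle A n m *v ((mat 1 - P m) *v x)) \<le> K * exp (- lam * real (m - n)) * N m x \<and>
           N m (cocycle A m n *v x) \<le> K * exp (a * real (m - n)) * N n x \<and>
           N n (cocycle A n m *v x) \<le> K * exp (a * real (m - n)) * N m x))"

end

theory Submission
  imports Defs
begin

lemma minv: assumes "invertible (B::real^'d^'d)"
  shows "B ** matrix_inv B = mat 1" "matrix_inv B ** B = mat 1"
proof -
  have "\<exists>B'. B ** B' = mat 1 \<and> B' ** B = mat 1" using assms unfolding invertible_def .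
  from someI_ex[OF this] show "B ** matrix_inv B = mat 1" "matrix_inv B ** B = mat 1"
    unfolding matrix_inv_def by auto
qed

lemma fwd_comm:
  assumes "\<And>n. A n ** R n = R (Suc n) ** A n"
  shows "R (n + k) ** fwd_prod A n k = fwd_prod A n k ** R n"
proof (induction k)
  case 0 then show ?case by simp
next
  case (Suc k)
  have "R (n + Suc k) ** fwd_prod A n (Suc k) = (R (Suc (n+k)) ** A (n+k)) ** fwd_prod A n k"
    by (simp add: matrix_mul_assoc)
  also have "\<dots> = A (n+k) ** (R (n+k) ** fwd_prod A n k)"
    by (simp add: assms[symmetric] matrix_mul_assoc)
  also have "\<dots> = fwd_prod A n (Suc k) ** R n" using Suc by (simp add: matrix_mul_assoc)
  finally show ?case .
qed

lemma bwd_comm: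
  assumes "\<And>n. A n ** R n = R (Suc n) ** A n" and "\<And>n. invertible (A n)"
  shows "bwd_prod A n k ** R (n + k) = R n ** bwd_prod A n k"
proof (induction k)
  case 0 then show ?case by simp
next
  case (Suc k)
  have inv: "matrix_inv (A j) ** R (Suc j) = R j ** matrix_inv (A j)" for j
  proof -
    have "matrix_inv (A j) ** R (Suc j) = matrix_inv (A j) ** R (Suc j) ** (A j ** matrix_inv (A j))"
      using minv[OF assms(2)] by simp
    also have "\<dots> = matrix_inv (A j) ** (R (Suc j) ** A j) ** matrix_inv (A j)"
      by (simp add: matrix_mul_assoc)
    also have "\<dots> = (matrix_inv (A j) ** A j) ** R j ** matrix_inv (A j)"
      by (simp add: assms(1)[symmetric] matrix_mul_assoc)
    finally show ?thesis using minv[OF assms(2)] by simp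
  qed
  have "bwd_prod A n (Suc k) ** R (n + Suc k) = bwd_prod A n k ** (matrix_inv (A (n+k)) ** R (Suc (n+k)))"
    by (simp add: matrix_mul_assoc)
  also have "\<dots> = (bwd_prod A n k ** R (n+k)) ** matrix_inv (A (n+k))"
    by (simp add: inv matrix_mul_assoc)
  also have "\<dots> = R n ** bwd_prod A n (Suc k)" using Suc by (simp add: matrix_mul_assoc)
  finally show ?case .
qed

lemma fb_id:
  assumes "\<And>n. invertible (A n)"
  shows "fwd_prod A n k ** bwd_prod A n k = mat 1" "bwd_prod A n k ** fwd_prod A n k = mat 1"
proof (induction k)
  case 0 { case 1 show ?case by simp next case 2 show ?case by simp }
next
  case (Suc k)
  { case 1
    have "fwd_prod A n (Suc k) ** bwd_prod A n (Suc k) =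
      A (n+k) ** (fwd_prod A n k ** bwd_prod A n k) ** matrix_inv (A (n+k))"
      by (simp add: matrix_mul_assoc)
    then show ?case using Suc(1) minv[OF assms] by simp
  next
    case 2
    have "bwd_prod A n (Suc k) ** fwd_prod A n (Suc k) =
      bwd_prod A n k ** (matrix_inv (A (n+k)) ** A (n+k)) ** fwd_prod A n k"
      by (simp add: matrix_mul_assoc)
    then show ?case using Suc(2) minv[OF assms] by simp }
qed

lemma coc_fwd: "n \<le> m \<Longrightarrow> cocycle A m n = fwd_prod A n (m - n)"
  by (simp add: cocycle_def)
lemma coc_bwd: "n \<le> m \<Longrightarrow> cocycle A n m = bwd_prod A n (m - n)"
  by (cases "m = n") (auto simp: cocycle_def)
lemma coc_same[simp]: "cocycle A n n = mat 1"
  by (simp add: cocycle_def)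

lemma comm_diff:
  fixes A R :: "nat \<Rightarrow> real^'d^'d"
  assumes "\<And>n. A n ** R n = R (Suc n) ** A n"
  shows "A n ** (mat 1 - R n) = (mat 1 - R (Suc n)) ** A n"
proof (subst matrix_eq, rule allI)
  fix x
  have e: "(mat 1 - R n) *v x = x - R n *v x" by (simp add: matrix_vector_mult_diff_rdistrib)
  have "(A n ** (mat 1 - R n)) *v x = A n *v x - (A n ** R n) *v x"
    by (simp only: matrix_vector_mul_assoc[symmetric] e matrix_vector_mult_diff_distrib)
  also have "\<dots> = A n *v x - (R (Suc n) ** A n) *v x" by (simp only: assms)
  also have "\<dots> = ((mat 1 - R (Suc n)) ** A n) *v x"
    by (simp only: matrix_vector_mul_assoc[symmetric] matrix_vector_mult_diff_rdistrib
        matrix_vector_mul_lid)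
  finally show "(A n ** (mat 1 - R n)) *v x = ((mat 1 - R (Suc n)) ** A n) *v x" .
qed

lemma nrm_basic:
  assumes "is_norm_on N"
  shows "N 0 = 0" "N (- x) = N x" "N (x - y) \<le> N x + N y" "N (x + y) \<le> N x + N y"
    "0 \<le> N x" "N x = 0 \<longleftrightarrow> x = 0" "N (c *\<^sub>R x) = \<bar>c\<bar> * N x"
proof -
  show "N 0 = 0" using assms unfolding is_norm_on_def by auto
  show neg: "N (- x) = N x" for x using assms unfolding is_norm_on_def
    by (metis abs_minus_cancel abs_one mult_1 scaleR_minus1_left)
  show "N (x - y) \<le> N x + N y" using assms neg[of y] unfolding is_norm_on_def
    by (metis diff_conv_add_uminus)
  show "N (x + y) \<le> N x + N y" "0 \<le> N x" "N x = 0 \<longleftrightarrow> x = 0" "N (c *\<^sub>R x) = \<bar>c\<bar> * N x"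
    using assms unfolding is_norm_on_def by auto
qed

lemma nrm_sum:
  assumes "is_norm_on N" "finite S"
  shows "N (sum f S) \<le> sum (\<lambda>i. N (f i)) S"
  using assms(2)
proof (induction S rule: finite_induct)
  case empty then show ?case by (simp add: nrm_basic(1)[OF assms(1)])
next
  case (insert a S)
  then show ?case using nrm_basic(4)[OF assms(1), of "f a" "sum f S"] by simp
qed

lemma nrm_upper:
  fixes N :: "real^'d \<Rightarrow> real"
  assumes "is_norm_on N"
  shows "\<exists>M\<ge>0. \<forall>x. N x \<le> M * norm x"
proof (intro exI[of _ "\<Sum>i\<in>UNIV. N (axis i 1)"] conjI allI)
  show "0 \<le> (\<Sum>i\<in>UNIV. N (axis i (1::real)))" using nrm_basic(5)[OF assms] by (simp add: sum_nonneg)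
  fix x :: "real^'d"
  have "N x = N (\<Sum>i\<in>UNIV. (x$i) *\<^sub>R axis i 1)"
    using basis_expansion[of x] by (simp add: scalar_mult_eq_scaleR)
  also have "\<dots> \<le> (\<Sum>i\<in>UNIV. N ((x$i) *\<^sub>R axis i 1))" by (rule nrm_sum[OF assms]) simp
  also have "\<dots> = (\<Sum>i\<in>UNIV. \<bar>x$i\<bar> * N (axis i 1))" using nrm_basic(7)[OF assms] by simp
  also have "\<dots> \<le> (\<Sum>i\<in>UNIV. norm x * N (axis i 1))"
    by (intro sum_mono mult_right_mono component_le_norm_cart nrm_basic(5)[OF assms])
  finally show "N x \<le> (\<Sum>i\<in>UNIV. N (axis i 1)) * norm x" by (simp add: sum_distrib_left mult.commute)
qed

lemma nrm_lower:
  fixes N :: "real^'d \<Rightarrow> real"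
  assumes "is_norm_on N"
  shows "\<exists>c>0. \<forall>x. c * norm x \<le> N x"
proof -
  obtain M where M: "M \<ge> 0" "\<And>x. N x \<le> M * norm x" using nrm_upper[OF assms] by blast
  have "M-lipschitz_on (sphere 0 1) N"
  proof (rule lipschitz_onI)
    fix x y :: "real^'d"
    have "N x \<le> N y + N (x - y)" using nrm_basic(4)[OF assms, of y "x - y"] by simp
    moreover have "N y \<le> N x + N (y - x)" using nrm_basic(4)[OF assms, of x "y - x"] by simp
    moreover have "N (y - x) = N (x - y)" using nrm_basic(2)[OF assms, of "x - y"] by simp
    ultimately have "\<bar>N x - N y\<bar> \<le> N (x - y)" by linarith
    also have "\<dots> \<le> M * norm (x - y)" by (rule M(2))
    finally show "dist (N x) (N y) \<le> M * dist x y" by (simp add: dist_norm dist_real_def)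
  qed (rule M(1))
  then have cont: "continuous_on (sphere 0 1) N" by (rule lipschitz_on_continuous_on)
  obtain i :: 'd where True by simp
  have "axis i (1::real) \<in> sphere 0 1" by simp
  then have ne: "sphere (0::real^'d) 1 \<noteq> {}" by blast
  obtain x0 where x0: "x0 \<in> sphere 0 1" "\<And>y. y \<in> sphere 0 1 \<Longrightarrow> N x0 \<le> N y"
    using continuous_attains_inf[OF compact_sphere ne cont] by blast
  have "x0 \<noteq> 0" using x0(1) by auto
  then have c: "N x0 > 0" using nrm_basic(5,6)[OF assms, of x0] by linarith
  show ?thesis
  proof (intro exI[of _ "N x0"] conjI allI c)
    fix x :: "real^'d"
    show "N x0 * norm x \<le> N x"
    proof (cases "x = 0")
      case True then show ?thesis using nrm_basic(1)[OF assms] by simp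
    next
      case False
      have "N x0 \<le> N ((1 / norm x) *\<^sub>R x)" using False by (intro x0(2)) simp
      also have "\<dots> = N x / norm x" using nrm_basic(7)[OF assms] by simp
      finally show ?thesis using False by (simp add: field_simps)
    qed
  qed
qed

lemma nrm_op:
  fixes N :: "real^'d \<Rightarrow> real" and S :: "real^'d^'d"
  assumes "is_norm_on N"
  shows "\<exists>C>0. \<forall>x. N (S *v x) \<le> C * N x"
proof -
  obtain M where M: "M \<ge> 0" "\<And>x. N x \<le> M * norm x" using nrm_upper[OF assms] by blast
  obtain c where c: "c > 0" "\<And>x. c * norm x \<le> N x" using nrm_lower[OF assms] by blast
  have "bounded_linear (\<lambda>x. S *v x)" using matrix_vector_mul_linear linear_conv_bounded_linear by blast
  then obtain B where B: "B > 0" "\<And>x. norm (S *v x) \<le> norm x * B"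
    using bounded_linear.pos_bounded by blast
  show ?thesis
  proof (intro exI[of _ "(M + 1) * B / c"] conjI allI)
    show "0 < (M + 1) * B / c" using M c B by simp
    fix x
    have "N (S *v x) \<le> M * norm (S *v x)" by (rule M(2))
    also have "\<dots> \<le> M * (norm x * B)" by (rule mult_left_mono[OF B(2) M(1)])
    also have "\<dots> \<le> (M + 1) * (norm x * B)" using B(1)
      by (intro mult_right_mono) auto
    also have "\<dots> = ((M + 1) * B / c) * (c * norm x)" using c by simp
    also have "\<dots> \<le> ((M + 1) * B / c) * N x" using M c B
      by (intro mult_left_mono[OF c(2)]) simp
    finally show "N (S *v x) \<le> (M + 1) * B / c * N x" .
  qed
qed

lemma sed_unfold:
  assumes "strong_exp_dichotomy A N P"
  obtains K a lam where "\<And>n. A n ** P n = P (Suc n) ** A n" "K > 0" "lam > 0" "a \<ge> lam"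
    "\<And>m n x. n \<le> m \<Longrightarrow> N m (cocycle A m n *v (P n *v x)) \<le> K * exp (- lam * real (m - n)) * N n x"
    "\<And>m n x. n \<le> m \<Longrightarrow> N n (cocycle A n m *v ((mat 1 - P m) *v x)) \<le> K * exp (- lam * real (m - n)) * N m x"
    "\<And>m n x. n \<le> m \<Longrightarrow> N m (cocycle A m n *v x) \<le> K * exp (a * real (m - n)) * N n x"
    "\<And>m n x. n \<le> m \<Longrightarrow> N n (cocycle A n m *v x) \<le> K * exp (a * real (m - n)) * N m x"
  using assms unfolding strong_exp_dichotomy_def by blast

lemma zero_by_decay:
  fixes v C lam :: real
  assumes "lam > 0" "\<And>m::nat. v \<le> C * exp (- lam * real m)"
  shows "v \<le> 0"
proof -
  have e: "exp (- lam * real m) = exp (- lam) ^ m" for m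
    using exp_of_nat_mult[of m "- lam"] by (simp add: mult.commute)
  have "(\<lambda>m. exp (- lam) ^ m) \<longlonglongrightarrow> 0" using assms(1) by (intro LIMSEQ_power_zero) simp
  then have "(\<lambda>m. C * exp (- lam) ^ m) \<longlonglongrightarrow> C * 0" by (intro tendsto_mult tendsto_const)
  then have "v \<le> C * 0"
    by (rule LIMSEQ_le_const) (use assms(2) e in auto)
  then show ?thesis by simp
qed

lemma incl:
  fixes A P P' :: "nat \<Rightarrow> real^'d^'d" and N :: "nat \<Rightarrow> real^'d \<Rightarrow> real"
  assumes inv: "\<And>n. invertible (A n)" and nrm: "\<And>n. is_norm_on (N n)"
    and sP: "strong_exp_dichotomy A N P" and sP': "strong_exp_dichotomy A N P'"
  shows "range (\<lambda>x. P 0 *v x) \<subseteq> range (\<lambda>x. P' 0 *v x)"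
proof
  fix y assume "y \<in> range (\<lambda>x. P 0 *v x)"
  then obtain x where y: "y = P 0 *v x" by blast
  obtain K a lam where cP: "\<And>n. A n ** P n = P (Suc n) ** A n" and K: "K > 0" "lam > 0" "a \<ge> lam"
    and b1: "\<And>m n x. n \<le> m \<Longrightarrow> N m (cocycle A m n *v (P n *v x)) \<le> K * exp (- lam * real (m - n)) * N n x"
    using sed_unfold[OF sP] by metis
  obtain K' a' lam' where cP': "\<And>n. A n ** P' n = P' (Suc n) ** A n" and K': "K' > 0" "lam' > 0"
    and b2: "\<And>m n x. n \<le> m \<Longrightarrow> N n (cocycle A n m *v ((mat 1 - P' m) *v x)) \<le> K' * exp (- lam' * real (m - n)) * N m x"
    using sed_unfold[OF sP'] by metis
  have cQ': "\<And>n. A n ** (mat 1 - P' n) = (mat 1 - P' (Suc n)) ** A n" by (rule comm_diff[of A P', OF cP'])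
  have "N 0 ((mat 1 - P' 0) *v y) \<le> 0"
  proof (rule zero_by_decay[OF K'(2)])
    fix m :: nat
    have bc: "bwd_prod A 0 m ** (mat 1 - P' m) = (mat 1 - P' 0) ** bwd_prod A 0 m"
      using bwd_comm[of A "\<lambda>n. mat 1 - P' n", OF cQ' inv, of 0 m] by simp
    have "(mat 1 - P' 0) *v y = ((mat 1 - P' 0) ** (bwd_prod A 0 m ** fwd_prod A 0 m)) *v y"
      using fb_id[OF inv] by simp
    also have "\<dots> = cocycle A 0 m *v ((mat 1 - P' m) *v (cocycle A m 0 *v y))"
      by (simp add: coc_fwd coc_bwd matrix_vector_mul_assoc matrix_mul_assoc bc)
    finally have eq: "(mat 1 - P' 0) *v y = cocycle A 0 m *v ((mat 1 - P' m) *v (cocycle A m 0 *v y))" .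
    have "N 0 ((mat 1 - P' 0) *v y) \<le> K' * exp (- lam' * real m) * N m (cocycle A m 0 *v y)"
      using b2[of 0 m] eq by simp
    also have "\<dots> \<le> K' * exp (- lam' * real m) * (K * exp (- lam * real m) * N 0 x)"
      using b1[of 0 m x] y K' by (intro mult_left_mono) auto
    also have "\<dots> \<le> K' * exp (- lam' * real m) * (K * N 0 x)"
      using K K' nrm_basic(5)[OF nrm] by (intro mult_left_mono mult_right_mono) auto
    finally show "N 0 ((mat 1 - P' 0) *v y) \<le> (K' * K * N 0 x) * exp (- lam' * real m)"
      by (simp add: mult_ac)
  qed
  then have "(mat 1 - P' 0) *v y = 0" using nrm_basic(5,6)[OF nrm] by (meson order.antisym)
  then have "y = P' 0 *v y" by (simp add: matrix_vector_mult_diff_rdistrib)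
  then show "y \<in> range (\<lambda>x. P' 0 *v x)" by blast
qed

lemma bwd_dir:
  fixes A P P' :: "nat \<Rightarrow> real^'d^'d" and N :: "nat \<Rightarrow> real^'d \<Rightarrow> real"
  assumes inv: "\<And>n. invertible (A n)" and nrm: "\<And>n. is_norm_on (N n)"
    and pP: "\<And>n. is_projection (P n)"
    and sP: "strong_exp_dichotomy A N P"
    and pP': "\<And>n. is_projection (P' n)"
    and cP'0: "\<And>n. P' (Suc n) ** A n = A n ** P' n"
    and rg: "range (\<lambda>x. P 0 *v x) = range (\<lambda>x. P' 0 *v x)"
  shows "strong_exp_dichotomy A N P'"
proof -
  obtain K a lam where cP: "\<And>n. A n ** P n = P (Suc n) ** A n" and K: "K > 0" "lam > 0" "a \<ge> lam"
    and b1: "\<And>m n x. n \<le> m \<Longrightarrow> N m (cocycle A m n *v (P n *v x)) \<le> K * exp (- lam * real (m - n)) * N n x"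
    and b2: "\<And>m n x. n \<le> m \<Longrightarrow> N n (cocycle A n m *v ((mat 1 - P m) *v x)) \<le> K * exp (- lam * real (m - n)) * N m x"
    and b3: "\<And>m n x. n \<le> m \<Longrightarrow> N m (cocycle A m n *v x) \<le> K * exp (a * real (m - n)) * N n x"
    and b4: "\<And>m n x. n \<le> m \<Longrightarrow> N n (cocycle A n m *v x) \<le> K * exp (a * real (m - n)) * N m x"
    using sed_unfold[OF sP] by metis
  have cP': "\<And>n. A n ** P' n = P' (Suc n) ** A n" using cP'0 by simp
  have cQ: "\<And>n. A n ** (mat 1 - P n) = (mat 1 - P (Suc n)) ** A n" by (rule comm_diff[of A P, OF cP])
  have cQ': "\<And>n. A n ** (mat 1 - P' n) = (mat 1 - P' (Suc n)) ** A n" by (rule comm_diff[of A P', OF cP'])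
  have idP: "P n *v (P n *v x) = P n *v x" for n x
    using pP[of n] by (simp add: is_projection_def matrix_vector_mul_assoc)
  have idP': "P' n *v (P' n *v x) = P' n *v x" for n x
    using pP'[of n] by (simp add: is_projection_def matrix_vector_mul_assoc)
  have PP'0: "P 0 *v (P' 0 *v x) = P' 0 *v x" for x
  proof -
    have "P' 0 *v x \<in> range (\<lambda>x. P 0 *v x)" using rg by blast
    then obtain z where "P' 0 *v x = P 0 *v z" by blast
    then show ?thesis using idP by simp
  qed
  have P'P0: "P' 0 *v (P 0 *v x) = P 0 *v x" for x
  proof -
    have "P 0 *v x \<in> range (\<lambda>x. P' 0 *v x)" using rg by blast
    then obtain z where "P 0 *v x = P' 0 *v z" by blast
    then show ?thesis using idP' by simp
  qed
  obtain CD where CD: "CD > 0" "\<And>x. N 0 ((P' 0 - P 0) *v x) \<le> CD * N 0 x"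
    using nrm_op[OF nrm[of 0], of "P' 0 - P 0"] by blast
  define E where "E = K + K * CD * K"
  have E0: "E \<ge> 0" using K CD unfolding E_def by simp
  have ex1: "exp (- lam * real j) \<le> 1" for j using K by simp
  have Nnn: "0 \<le> N n x" for n x using nrm_basic(5)[OF nrm] .
  have gen: "P n *v (P' n *v x) = P' n *v x \<and> P' n *v (P n *v x) = P n *v x \<and>
     P' n *v x - P n *v x = cocycle A n 0 *v (P 0 *v ((P' 0 - P 0) *v (cocycle A 0 n *v ((mat 1 - P n) *v x))))"
    for n x
  proof -
    define F where "F = fwd_prod A 0 n"
    define B where "B = bwd_prod A 0 n"
    have FB: "F ** B = mat 1" "B ** F = mat 1" using fb_id[OF inv] unfolding F_def B_def by auto
    have PF: "P n ** F = F ** P 0" using fwd_comm[of A P, OF cP, of 0 n] unfolding F_def by simp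
    have P'F: "P' n ** F = F ** P' 0" using fwd_comm[of A P', OF cP', of 0 n] unfolding F_def by simp
    have QB: "B ** (mat 1 - P n) = (mat 1 - P 0) ** B"
      using bwd_comm[of A "\<lambda>n. mat 1 - P n", OF cQ inv, of 0 n] unfolding B_def by simp
    have Pn: "P n = F ** P 0 ** B"
    proof -
      have "P n = P n ** (F ** B)" using FB by simp
      also have "\<dots> = F ** P 0 ** B" by (simp add: matrix_mul_assoc PF)
      finally show ?thesis .
    qed
    have P'n: "P' n = F ** P' 0 ** B"
    proof -
      have "P' n = P' n ** (F ** B)" using FB by simp
      also have "\<dots> = F ** P' 0 ** B" by (simp add: matrix_mul_assoc P'F)
      finally show ?thesis .
    qed
    have BF: "B *v (F *v y) = y" for y using FB by (simp add: matrix_vector_mul_assoc)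
    have "P n *v (P' n *v x) = P' n *v x"
      unfolding Pn P'n by (simp add: matrix_vector_mul_assoc[symmetric] BF PP'0)
    moreover have "P' n *v (P n *v x) = P n *v x"
      unfolding Pn P'n by (simp add: matrix_vector_mul_assoc[symmetric] BF P'P0)
    moreover have "P' n *v x - P n *v x = F *v (P 0 *v ((P' 0 - P 0) *v (B *v ((mat 1 - P n) *v x))))"
    proof -
      have "B *v ((mat 1 - P n) *v x) = (mat 1 - P 0) *v (B *v x)"
        by (simp add: matrix_vector_mul_assoc QB)
      then have "F *v (P 0 *v ((P' 0 - P 0) *v (B *v ((mat 1 - P n) *v x))))
          = F *v (P' 0 *v (B *v x) - P 0 *v (B *v x))"
        by (simp add: matrix_vector_mult_diff_rdistrib matrix_vector_mult_diff_distrib PP'0 P'P0 idP)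
      also have "\<dots> = P' n *v x - P n *v x"
        unfolding Pn P'n by (simp add: matrix_vector_mult_diff_distrib matrix_vector_mul_assoc matrix_mul_assoc)
      finally show ?thesis by simp
    qed
    ultimately show ?thesis unfolding F_def B_def by (simp add: coc_fwd coc_bwd)
  qed
  have bdP': "N n (P' n *v x) \<le> E * N n x" for n x
  proof -
    define u where "u = cocycle A 0 n *v ((mat 1 - P n) *v x)"
    have "N n (P' n *v x) = N n (P n *v x + (P' n *v x - P n *v x))" by simp
    also have "\<dots> \<le> N n (P n *v x) + N n (P' n *v x - P n *v x)" by (rule nrm_basic(4)[OF nrm])
    also have "N n (P n *v x) \<le> K * N n x" using b1[of n n x] by simp
    also have "N n (P' n *v x - P n *v x) = N n (cocycle A n 0 *v (P 0 *v ((P' 0 - P 0) *v u)))"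
      using gen[of n x] unfolding u_def by simp
    also have "\<dots> \<le> K * exp (- lam * real n) * N 0 ((P' 0 - P 0) *v u)" using b1[of 0 n] by simp
    also have "\<dots> \<le> K * 1 * (CD * N 0 u)"
      using K ex1[of n] CD(2)[of u] Nnn by (intro mult_mono) auto
    also have "N 0 u \<le> K * exp (- lam * real n) * N n x" using b2[of 0 n x] unfolding u_def by simp
    also have "\<dots> \<le> K * 1 * N n x" using K ex1[of n] Nnn by (intro mult_mono) auto
    finally show ?thesis using K CD Nnn unfolding E_def by (simp add: algebra_simps mult_left_mono)
  qed
  have bdQ': "N n ((mat 1 - P' n) *v x) \<le> (1 + E) * N n x" for n x
  proof -
    have "N n ((mat 1 - P' n) *v x) = N n (x - P' n *v x)" by (simp add: matrix_vector_mult_diff_rdistrib)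
    also have "\<dots> \<le> N n x + N n (P' n *v x)" by (rule nrm_basic(3)[OF nrm])
    also have "\<dots> \<le> N n x + E * N n x" using bdP' by simp
    finally show ?thesis by (simp add: algebra_simps)
  qed
  define K2 where "K2 = K * (1 + E)"
  have K2: "K2 > 0" "K \<le> K2" using K E0 unfolding K2_def by auto
  show ?thesis
    unfolding strong_exp_dichotomy_def
  proof (rule conjI[OF allI[OF cP']], rule exI[of _ K2], rule exI[of _ a], rule exI[of _ lam],
      intro conjI allI impI)
    show "K2 > 0" "lam > 0" "a \<ge> lam" using K2 K by auto
  next
    fix m n :: nat and x :: "real^'d" assume nm: "n \<le> m"
    have "N m (cocycle A m n *v (P' n *v x)) = N m (cocycle A m n *v (P n *v (P' n *v x)))"
      using gen by simp
    also have "\<dots> \<le> K * exp (- lam * real (m - n)) * N n (P' n *v x)" by (rule b1[OF nm])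
    also have "\<dots> \<le> K * exp (- lam * real (m - n)) * (E * N n x)"
      using K by (intro mult_left_mono bdP') auto
    also have "\<dots> \<le> K2 * exp (- lam * real (m - n)) * N n x"
      using K E0 Nnn unfolding K2_def by (simp add: algebra_simps mult_right_mono)
    finally show "N m (cocycle A m n *v (P' n *v x)) \<le> K2 * exp (- lam * real (m - n)) * N n x" .
  next
    fix m n :: nat and x :: "real^'d" assume nm: "n \<le> m"
    have bc: "bwd_prod A n (m - n) ** (mat 1 - P' m) = (mat 1 - P' n) ** bwd_prod A n (m - n)"
      using bwd_comm[of A "\<lambda>n. mat 1 - P' n", OF cQ' inv, of n "m - n"] nm by simp
    have QQ: "(mat 1 - P' m) *v x = (mat 1 - P' m) *v ((mat 1 - P m) *v x)"
      using gen[of m x] by (simp add: matrix_vector_mult_diff_rdistrib matrix_vector_mult_diff_distrib)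
    have "N n (cocycle A n m *v ((mat 1 - P' m) *v x))
        = N n ((mat 1 - P' n) *v (cocycle A n m *v ((mat 1 - P m) *v x)))"
      unfolding QQ using nm by (simp add: coc_bwd matrix_vector_mul_assoc matrix_mul_assoc bc)
    also have "\<dots> \<le> (1 + E) * N n (cocycle A n m *v ((mat 1 - P m) *v x))" by (rule bdQ')
    also have "\<dots> \<le> (1 + E) * (K * exp (- lam * real (m - n)) * N m x)"
      using E0 by (intro mult_left_mono b2[OF nm]) auto
    also have "\<dots> = K2 * exp (- lam * real (m - n)) * N m x" unfolding K2_def by (simp add: algebra_simps)
    finally show "N n (cocycle A n m *v ((mat 1 - P' m) *v x)) \<le> K2 * exp (- lam * real (m - n)) * N m x" .
  next
    fix m n :: nat and x :: "real^'d" assume nm: "n \<le> m"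
    have "N m (cocycle A m n *v x) \<le> K * exp (a * real (m - n)) * N n x" by (rule b3[OF nm])
    also have "\<dots> \<le> K2 * exp (a * real (m - n)) * N n x"
      using K2 Nnn by (intro mult_right_mono) auto
    finally show "N m (cocycle A m n *v x) \<le> K2 * exp (a * real (m - n)) * N n x" .
  next
    fix m n :: nat and x :: "real^'d" assume nm: "n \<le> m"
    have "N n (cocycle A n m *v x) \<le> K * exp (a * real (m - n)) * N m x" by (rule b4[OF nm])
    also have "\<dots> \<le> K2 * exp (a * real (m - n)) * N m x"
      using K2 Nnn by (intro mult_right_mono) auto
    finally show "N n (cocycle A n m *v x) \<le> K2 * exp (a * real (m - n)) * N m x" .
  qed
qed

theorem lemma7p2:
  fixes A P P' :: "nat \<Rightarrow> real^'d^'d" and N :: "nat \<Rightarrow> real^'d \<Rightarrow> real"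
  assumes "\<And>n. invertible (A n)"
    and "\<And>n. is_norm_on (N n)"
    and "\<And>n. is_projection (P n)"
    and "strong_exp_dichotomy A N P"
    and "\<And>n. is_projection (P' n)"
    and "\<And>n. P' (Suc n) ** A n = A n ** P' n"
  shows "strong_exp_dichotomy A N P' \<longleftrightarrow> range (\<lambda>x. P 0 *v x) = range (\<lambda>x. P' 0 *v x)"
proof
  assume s: "strong_exp_dichotomy A N P'"
  show "range (\<lambda>x. P 0 *v x) = range (\<lambda>x. P' 0 *v x)"
    using incl[OF assms(1,2,4) s] incl[OF assms(1,2) s assms(4)] by blast
next
  assume "range (\<lambda>x. P 0 *v x) = range (\<lambda>x. P' 0 *v x)"
  then show "strong_exp_dichotomy A N P'" by (rule bwd_dir[OF assms])
qed

end
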